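(* Let $n\ge2$, $p\in(1,2)\cup(2,\infty)$. Let $\Omega\subset\mathbb{R}^n$ be a domain, $T>0$, $u$ a viscosity solution of $u_t-\Delta u-(p-2)\frac{\langle D^2uDu,Du\rangle}{|Du|^2}=0$ in $\Omega\times(0,T)$, $U\Subset\Omega$ a smooth domain, $U_T=U\times(0,T)$, $\varepsilon\in(0,1]$, and let $u^\varepsilon\in C^0(\overline{U_T})\cap C^\infty(U_T)$ be the viscosity solution of $u^\varepsilon_t-\Delta u^\varepsilon-(p-2)\frac{\langle D^2u^\varepsilon Du^\varepsilon,Du^\varepsilon\rangle}{|Du^\varepsilon|^2+\varepsilon}=0$ in $U_T$ with $u^\varepsilon=u$ on the parabolic boundary of $U_T$. Let $Q_{2r}=(s-4r^2,s)\times B(z,2r)\Subset U_T$ and $\phi\in C_c^\infty(B(z,2r)\times(s-4r^2,s+4r^2))$. Then for any $\eta\in(0,1)$, $$\frac{\varepsilon}{2}\int_{Q_{2r}}\frac{(\Delta u^\varepsilon)^2-|D^2u^\varepsilon|^2}{|Du^\varepsilon|^2+\varepsilon}\phi^2\,dx\,dt\le\frac{1}{4(p-1)}\int_{Q_{2r}}(u^\varepsilon_t)^2\phi^2\,dx\,dt+\eta\int_{Q_{2r}}|D^2u^\varepsilon|^2\phi^2\,dx\,dt+C(\eta)\,\varepsilon\int_{Q_{2r}}|D\phi|^2\,dx\,dt,$$ where $C(\eta)$ depends only on $\eta$ (and $n$).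
   Context: $D$, $D^2$ denote spatial derivatives. *)

theory Defs
  imports "HOL-Analysis.Analysis"
begin

definition ddir :: "'a::real_normed_vector \<Rightarrow> ('a \<Rightarrow> real) \<Rightarrow> 'a \<Rightarrow> real" where
  "ddir v f y = deriv (\<lambda>h. f (y + h *\<^sub>R v)) 0"

fun iter_ddir :: "'a::real_normed_vector list \<Rightarrow> ('a \<Rightarrow> real) \<Rightarrow> 'a \<Rightarrow> real" where
  "iter_ddir [] f = f"
| "iter_ddir (v # vs) f = ddir v (iter_ddir vs f)"

definition Ck_on :: "nat \<Rightarrow> 'a::real_normed_vector set \<Rightarrow> ('a \<Rightarrow> real) \<Rightarrow> bool" where
  "Ck_on k S f \<longleftrightarrow>
     (\<forall>vs. length vs \<le> k \<longrightarrow>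
        continuous_on S (iter_ddir vs f) \<and>
        (length vs < k \<longrightarrow>
           (\<forall>y\<in>S. \<forall>v. (\<lambda>h. iter_ddir vs f (y + h *\<^sub>R v)) field_differentiable (at 0))))"

definition smooth_on :: "'a::real_normed_vector set \<Rightarrow> ('a \<Rightarrow> real) \<Rightarrow> bool" where
  "smooth_on S f \<longleftrightarrow> (\<forall>k. Ck_on k S f)"

definition Dx :: "'n::finite \<Rightarrow> ((real^'n) \<times> real \<Rightarrow> real) \<Rightarrow> (real^'n) \<times> real \<Rightarrow> real" where
  "Dx i f = ddir (axis i 1, 0) f"

definition Dt :: "((real^'n::finite) \<times> real \<Rightarrow> real) \<Rightarrow> (real^'n) \<times> real \<Rightarrow> real" where
  "Dt f = ddir (0, 1) f"

definition grad_x :: "((real^'n::finite) \<times> real \<Rightarrow> real) \<Rightarrow> (real^'n) \<times> real \<Rightarrow> real^'n" where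
  "grad_x f y = (\<chi> i. Dx i f y)"

definition hess_x :: "((real^'n::finite) \<times> real \<Rightarrow> real) \<Rightarrow> (real^'n) \<times> real \<Rightarrow> real^'n^'n" where
  "hess_x f y = (\<chi> i j. Dx i (Dx j f) y)"

definition lap_x :: "((real^'n::finite) \<times> real \<Rightarrow> real) \<Rightarrow> (real^'n) \<times> real \<Rightarrow> real" where
  "lap_x f y = trace (hess_x f y)"

definition mat_norm_sq :: "real^'n::finite^'n \<Rightarrow> real" where
  "mat_norm_sq X = (\<Sum>i\<in>UNIV. \<Sum>j\<in>UNIV. (X $ i $ j)^2)"

text \<open>Crandall-Ishii-Lions definition: subsolutions are tested with the lower
  semicontinuous envelope F_lo, supersolutions with the upper one F_hi, using C^2 test
  functions touching from above / below at a point of the open set D.\<close>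
definition visc_subsol ::
  "(real^'n::finite \<Rightarrow> real^'n^'n \<Rightarrow> real) \<Rightarrow> ((real^'n) \<times> real) set \<Rightarrow> ((real^'n) \<times> real \<Rightarrow> real) \<Rightarrow> bool" where
  "visc_subsol F D u \<longleftrightarrow>
     (\<forall>\<phi> y. Ck_on 2 D \<phi> \<and> y \<in> D \<and>
        (\<exists>\<delta>>0. \<forall>y'\<in>D \<inter> ball y \<delta>. u y' - \<phi> y' \<le> u y - \<phi> y)
        \<longrightarrow> Dt \<phi> y + F (grad_x \<phi> y) (hess_x \<phi> y) \<le> 0)"

definition visc_supersol ::
  "(real^'n::finite \<Rightarrow> real^'n^'n \<Rightarrow> real) \<Rightarrow> ((real^'n) \<times> real) set \<Rightarrow> ((real^'n) \<times> real \<Rightarrow> real) \<Rightarrow> bool" where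
  "visc_supersol F D u \<longleftrightarrow>
     (\<forall>\<phi> y. Ck_on 2 D \<phi> \<and> y \<in> D \<and>
        (\<exists>\<delta>>0. \<forall>y'\<in>D \<inter> ball y \<delta>. u y' - \<phi> y' \<ge> u y - \<phi> y)
        \<longrightarrow> Dt \<phi> y + F (grad_x \<phi> y) (hess_x \<phi> y) \<ge> 0)"

definition visc_sol ::
  "(real^'n::finite \<Rightarrow> real^'n^'n \<Rightarrow> real) \<Rightarrow> (real^'n \<Rightarrow> real^'n^'n \<Rightarrow> real)
     \<Rightarrow> ((real^'n) \<times> real) set \<Rightarrow> ((real^'n) \<times> real \<Rightarrow> real) \<Rightarrow> bool" where
  "visc_sol F_lo F_hi D u \<longleftrightarrow>
     continuous_on D u \<and> visc_subsol F_lo D u \<and> visc_supersol F_hi D u"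

text \<open>F(q,X) = -tr X - (p-2) <X q, q>/|q|^2 (q /= 0), with its semicontinuous envelopes at q = 0.\<close>
definition pF_lo :: "real \<Rightarrow> real^'n::finite \<Rightarrow> real^'n^'n \<Rightarrow> real" where
  "pF_lo p q X =
     (if q \<noteq> 0 then - trace X - (p - 2) * ((X *v q) \<bullet> q) / (norm q)^2
      else Inf ((\<lambda>e. - trace X - (p - 2) * ((X *v e) \<bullet> e)) ` sphere 0 1))"

definition pF_hi :: "real \<Rightarrow> real^'n::finite \<Rightarrow> real^'n^'n \<Rightarrow> real" where
  "pF_hi p q X =
     (if q \<noteq> 0 then - trace X - (p - 2) * ((X *v q) \<bullet> q) / (norm q)^2
      else Sup ((\<lambda>e. - trace X - (p - 2) * ((X *v e) \<bullet> e)) ` sphere 0 1))"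

definition pF_eps :: "real \<Rightarrow> real \<Rightarrow> real^'n::finite \<Rightarrow> real^'n^'n \<Rightarrow> real" where
  "pF_eps p \<epsilon> q X = - trace X - (p - 2) * ((X *v q) \<bullet> q) / ((norm q)^2 + \<epsilon>)"

definition smooth_domain :: "(real^'n::finite) set \<Rightarrow> bool" where
  "smooth_domain U \<longleftrightarrow> open U \<and> connected U \<and> U \<noteq> {} \<and> bounded U \<and>
     (\<exists>\<rho>. smooth_on UNIV \<rho> \<and> U = {x. \<rho> x < 0} \<and>
          (\<forall>x. \<rho> x = 0 \<longrightarrow> (\<chi> i. ddir (axis i 1) \<rho> x) \<noteq> 0))"

definition parabolic_boundary :: "(real^'n::finite) set \<Rightarrow> real \<Rightarrow> ((real^'n) \<times> real) set" where
  "parabolic_boundary U T = (closure U \<times> {0}) \<union> (frontier U \<times> {0..<T})"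

end

theory Submission
  imports Defs
begin


lemma ddir_has_deriv:
  assumes "(\<lambda>h. f (y + h *\<^sub>R v)) field_differentiable (at 0)"
  shows "((\<lambda>h. f (y + h *\<^sub>R v)) has_real_derivative ddir v f y) (at 0)"
  unfolding ddir_def using assms DERIV_deriv_iff_field_differentiable by blast

lemma line_deriv:
  assumes "(\<lambda>h. f ((x0 + s0 *\<^sub>R v) + h *\<^sub>R v)) field_differentiable (at 0)"
  shows "((\<lambda>s. f (x0 + s *\<^sub>R v)) has_real_derivative ddir v f (x0 + s0 *\<^sub>R v)) (at s0)"
proof -
  have "((\<lambda>h. f ((x0 + s0 *\<^sub>R v) + h *\<^sub>R v)) has_real_derivative ddir v f (x0 + s0 *\<^sub>R v)) (at 0)"
    by (rule ddir_has_deriv[OF assms])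
  moreover have "(\<lambda>h. f ((x0 + s0 *\<^sub>R v) + h *\<^sub>R v)) = (\<lambda>h. (\<lambda>s. f (x0 + s *\<^sub>R v)) (h + s0))"
    by (auto simp: algebra_simps)
  ultimately have "((\<lambda>h. (\<lambda>s. f (x0 + s *\<^sub>R v)) (h + s0)) has_real_derivative ddir v f (x0 + s0 *\<^sub>R v)) (at 0)"
    by simp
  then show ?thesis using DERIV_shift[of "\<lambda>s. f (x0 + s *\<^sub>R v)" _ 0 s0] by simp
qed

lemma Ck_cont: "Ck_on k S f \<Longrightarrow> length vs \<le> k \<Longrightarrow> continuous_on S (iter_ddir vs f)"
  unfolding Ck_on_def by blast

lemma Ck_diff: "Ck_on k S f \<Longrightarrow> length vs < k \<Longrightarrow> y \<in> S \<Longrightarrow>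
   (\<lambda>h. iter_ddir vs f (y + h *\<^sub>R v)) field_differentiable (at 0)"
  unfolding Ck_on_def by auto

lemma iter_ddir_append: "iter_ddir vs (iter_ddir ws f) = iter_ddir (vs @ ws) f"
  by (induction vs) auto

lemma Ck_shift: "Ck_on (k + length ws) S f \<Longrightarrow> Ck_on k S (iter_ddir ws f)"
  unfolding Ck_on_def iter_ddir_append by auto

lemma line_deriv_Ck:
  assumes "Ck_on k S f" "length vs < k" "x0 + s0 *\<^sub>R v \<in> S"
  shows "((\<lambda>s. iter_ddir vs f (x0 + s *\<^sub>R v)) has_real_derivative iter_ddir (v # vs) f (x0 + s0 *\<^sub>R v)) (at s0)"
  using line_deriv[OF Ck_diff[OF assms]] by simp

lemma mixed_mvt:
  assumes ck: "Ck_on 2 S f" and S: "ball y d \<subseteq> S" and t: "0 < t" "t * (norm v + norm w) < d"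
  shows "\<exists>s r. 0 < s \<and> s < t \<and> 0 < r \<and> r < t \<and>
    f (y + t *\<^sub>R v + t *\<^sub>R w) - f (y + t *\<^sub>R v) - f (y + t *\<^sub>R w) + f y
      = t^2 * ddir w (ddir v f) (y + s *\<^sub>R v + r *\<^sub>R w)"
proof -
  have inS: "y + s *\<^sub>R v + r *\<^sub>R w \<in> S" if "0 \<le> s" "s \<le> t" "0 \<le> r" "r \<le> t" for s r
  proof -
    have "norm (s *\<^sub>R v + r *\<^sub>R w) \<le> s * norm v + r * norm w"
      using norm_triangle_ineq[of "s *\<^sub>R v" "r *\<^sub>R w"] that by simp
    also have "\<dots> \<le> t * (norm v + norm w)"
      using that by (simp add: distrib_left add_mono mult_right_mono)
    finally have "norm (s *\<^sub>R v + r *\<^sub>R w) < d" using t by linarith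
    then have "dist y (y + s *\<^sub>R v + r *\<^sub>R w) < d"
      by (simp add: dist_norm add.assoc norm_minus_commute add.commute)
    then show ?thesis using S by auto
  qed
  define \<phi> where "\<phi> s = f ((y + t *\<^sub>R w) + s *\<^sub>R v) - f (y + s *\<^sub>R v)" for s
  have d\<phi>: "(\<phi> has_real_derivative (ddir v f ((y + t *\<^sub>R w) + s *\<^sub>R v) - ddir v f (y + s *\<^sub>R v))) (at s)"
    if "0 \<le> s" "s \<le> t" for s
    unfolding \<phi>_def
  proof (intro DERIV_diff)
    show "((\<lambda>s. f (y + t *\<^sub>R w + s *\<^sub>R v)) has_real_derivative ddir v f (y + t *\<^sub>R w + s *\<^sub>R v)) (at s)"
      using line_deriv_Ck[OF ck, of "[]" "y + t *\<^sub>R w" s v] inS[of s t] that t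
      by (simp add: algebra_simps)
    show "((\<lambda>s. f (y + s *\<^sub>R v)) has_real_derivative ddir v f (y + s *\<^sub>R v)) (at s)"
      using line_deriv_Ck[OF ck, of "[]" "y" s v] inS[of s 0] that t by simp
  qed
  obtain s where s: "0 < s" "s < t" "\<phi> t - \<phi> 0 = (t - 0) * (ddir v f ((y + t *\<^sub>R w) + s *\<^sub>R v) - ddir v f (y + s *\<^sub>R v))"
    using MVT2[OF t(1), of \<phi> "\<lambda>s. ddir v f ((y + t *\<^sub>R w) + s *\<^sub>R v) - ddir v f (y + s *\<^sub>R v)"] d\<phi> by auto
  define \<psi> where "\<psi> r = ddir v f ((y + s *\<^sub>R v) + r *\<^sub>R w)" for r
  have d\<psi>: "(\<psi> has_real_derivative ddir w (ddir v f) ((y + s *\<^sub>R v) + r *\<^sub>R w)) (at r)"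
    if "0 \<le> r" "r \<le> t" for r
    unfolding \<psi>_def
    using line_deriv_Ck[OF ck, of "[v]" "y + s *\<^sub>R v" r w] inS[of s r] that s by simp
  obtain r where r: "0 < r" "r < t" "\<psi> t - \<psi> 0 = (t - 0) * ddir w (ddir v f) ((y + s *\<^sub>R v) + r *\<^sub>R w)"
    using MVT2[OF t(1), of \<psi> "\<lambda>r. ddir w (ddir v f) ((y + s *\<^sub>R v) + r *\<^sub>R w)"] d\<psi> by auto
  have "f (y + t *\<^sub>R v + t *\<^sub>R w) - f (y + t *\<^sub>R v) - f (y + t *\<^sub>R w) + f y = \<phi> t - \<phi> 0"
    unfolding \<phi>_def by (simp add: algebra_simps)
  also have "\<dots> = t * (\<psi> t - \<psi> 0)"
    using s(3) unfolding \<psi>_def by (simp add: algebra_simps)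
  also have "\<dots> = t^2 * ddir w (ddir v f) (y + s *\<^sub>R v + r *\<^sub>R w)"
    using r(3) by (simp add: power2_eq_square)
  finally show ?thesis using s r by blast
qed

lemma schwarz:
  assumes ck: "Ck_on 2 S f" and S: "open S" and y: "y \<in> S"
  shows "ddir v (ddir w f) y = ddir w (ddir v f) y"
proof (rule ccontr)
  assume ne: "ddir v (ddir w f) y \<noteq> ddir w (ddir v f) y"
  define e where "e = \<bar>ddir v (ddir w f) y - ddir w (ddir v f) y\<bar> / 2"
  have e: "e > 0" using ne by (simp add: e_def)
  have c1: "continuous_on S (ddir v (ddir w f))"
    using Ck_cont[OF ck, of "[v,w]"] by simp
  have c2: "continuous_on S (ddir w (ddir v f))"
    using Ck_cont[OF ck, of "[w,v]"] by simp
  obtain d1 where d1: "d1 > 0" "\<And>x. dist x y < d1 \<Longrightarrow> dist (ddir v (ddir w f) x) (ddir v (ddir w f) y) < e"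
    using c1 S y e unfolding continuous_on_eq_continuous_at[OF S] continuous_at_eps_delta by metis
  obtain d2 where d2: "d2 > 0" "\<And>x. dist x y < d2 \<Longrightarrow> dist (ddir w (ddir v f) x) (ddir w (ddir v f) y) < e"
    using c2 S y e unfolding continuous_on_eq_continuous_at[OF S] continuous_at_eps_delta by metis
  obtain d0 where d0: "d0 > 0" "ball y d0 \<subseteq> S" using S y open_contains_ball by blast
  define d where "d = min d0 (min d1 d2)"
  have d: "d > 0" "ball y d \<subseteq> S" using d0 d1 d2 by (auto simp: d_def)
  define t where "t = d / (2 * (norm v + norm w + 1))"
  have t: "0 < t" using d unfolding t_def
    by (intro divide_pos_pos) (auto intro: add_pos_nonneg add_nonneg_pos)
  have tt: "t * (norm v + norm w) < d"
  proof -
    have "t * (norm v + norm w) \<le> t * (norm v + norm w + 1)" using t by simp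
    also have "\<dots> = d / 2"
    proof -
      have "norm v + norm w + 1 > 0" by (simp add: add_pos_nonneg add_nonneg_pos)
      then show ?thesis unfolding t_def by (simp add: field_simps)
    qed
    finally show ?thesis using d by simp
  qed
  have near: "dist (y + s *\<^sub>R a + r *\<^sub>R b) y < d"
    if "0 < s" "s < t" "0 < r" "r < t" "(a = v \<and> b = w) \<or> (a = w \<and> b = v)" for s r a b
  proof -
    have "norm (s *\<^sub>R a + r *\<^sub>R b) \<le> s * norm a + r * norm b"
      using norm_triangle_ineq[of "s *\<^sub>R a" "r *\<^sub>R b"] that by simp
    also have "\<dots> \<le> t * (norm a + norm b)"
      using that by (simp add: distrib_left add_mono mult_right_mono)
    also have "\<dots> = t * (norm v + norm w)" using that(5) by auto
    finally show ?thesis using tt by (simp add: dist_norm add.assoc)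
  qed
  obtain s r where sr: "0 < s" "s < t" "0 < r" "r < t"
    "f (y + t *\<^sub>R v + t *\<^sub>R w) - f (y + t *\<^sub>R v) - f (y + t *\<^sub>R w) + f y
      = t^2 * ddir w (ddir v f) (y + s *\<^sub>R v + r *\<^sub>R w)"
    using mixed_mvt[OF ck d(2) t tt] by blast
  obtain s' r' where sr': "0 < s'" "s' < t" "0 < r'" "r' < t"
    "f (y + t *\<^sub>R w + t *\<^sub>R v) - f (y + t *\<^sub>R w) - f (y + t *\<^sub>R v) + f y
      = t^2 * ddir v (ddir w f) (y + s' *\<^sub>R w + r' *\<^sub>R v)"
    using mixed_mvt[OF ck d(2) t, of w v] tt by (auto simp: add.commute)
  have eq: "ddir w (ddir v f) (y + s *\<^sub>R v + r *\<^sub>R w) = ddir v (ddir w f) (y + s' *\<^sub>R w + r' *\<^sub>R v)"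
    using sr(5) sr'(5) t by (simp add: algebra_simps)
  have "dist (y + s *\<^sub>R v + r *\<^sub>R w) y < d2" using near[OF sr(1-4)] d_def by auto
  then have A: "dist (ddir w (ddir v f) (y + s *\<^sub>R v + r *\<^sub>R w)) (ddir w (ddir v f) y) < e"
    using d2 by blast
  have "dist (y + s' *\<^sub>R w + r' *\<^sub>R v) y < d1" using near[OF sr'(1-4)] d_def by auto
  then have B: "dist (ddir v (ddir w f) (y + s' *\<^sub>R w + r' *\<^sub>R v)) (ddir v (ddir w f) y) < e"
    using d1 by blast
  from A B eq have "\<bar>ddir v (ddir w f) y - ddir w (ddir v f) y\<bar> < 2 * e"
    by (simp add: dist_real_def)
  then show False unfolding e_def by simp
qed



lemma cont_int:
  fixes f :: "'a::euclidean_space \<Rightarrow> real"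
  assumes Q: "open Q" "bounded Q" and c: "continuous_on (closure Q) f"
  shows "f integrable_on Q"
proof -
  have cc: "compact (closure Q)" using Q by (simp add: compact_closure)
  then have "compact (f ` closure Q)" using c by (simp add: compact_continuous_image)
  then obtain M where M: "\<forall>x\<in>closure Q. norm (f x) \<le> M"
    using compact_imp_bounded[of "f ` closure Q"] unfolding bounded_iff by auto
  have L: "Q \<in> lmeasurable" using Q by (simp add: lmeasurable_open)
  show ?thesis
  proof (rule measurable_bounded_by_integrable_imp_integrable[where g="\<lambda>_. M"])
    show "f \<in> borel_measurable (lebesgue_on Q)"
      using continuous_imp_measurable_on_sets_lebesgue[of Q f] c L closure_subset
      by (meson continuous_on_subset fmeasurableD)
    show "(\<lambda>_. M) integrable_on Q" using L by (rule integrable_on_const)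
    show "norm (f x) \<le> M" if "x \<in> Q" for x using M that closure_subset by auto
    show "Q \<in> sets lebesgue" using L by auto
  qed
qed

lemma ibp:
  fixes G g :: "'a::euclidean_space \<Rightarrow> real"
  assumes Q: "open Q" "bounded Q" and cG: "continuous_on (closure Q) G"
    and cg: "continuous_on (closure Q) g"
    and dG: "\<And>y. y \<in> Q \<Longrightarrow> ((\<lambda>h. G (y + h *\<^sub>R e)) has_real_derivative g y) (at 0)"
    and out: "\<And>y. y \<notin> Q \<Longrightarrow> \<exists>d>0. \<forall>h. \<bar>h\<bar> < d \<longrightarrow> y + h *\<^sub>R e \<in> Q \<longrightarrow> G (y + h *\<^sub>R e) = 0"
  shows "g integrable_on Q \<and> integral Q g = 0"
proof -
  define Gt where "Gt y = (if y \<in> Q then G y else 0)" for y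
  define gt where "gt y = (if y \<in> Q then g y else 0)" for y
  have D0: "((\<lambda>h. Gt (y + h *\<^sub>R e)) has_real_derivative gt y) (at 0)" for y
  proof (cases "y \<in> Q")
    case True
    obtain r where r: "r > 0" "ball y r \<subseteq> Q" using Q(1) True open_contains_ball by blast
    have ev: "eventually (\<lambda>h. Gt (y + h *\<^sub>R e) = G (y + h *\<^sub>R e)) (nhds (0::real))"
      unfolding eventually_nhds_metric
    proof (intro exI[of _ "r / (norm e + 1)"] conjI allI impI)
      show "r / (norm e + 1) > 0" using r by (simp add: add_nonneg_pos)
      fix h :: real assume "dist h 0 < r / (norm e + 1)"
      then have "\<bar>h\<bar> * (norm e + 1) < r"
        by (simp add: pos_less_divide_eq add_nonneg_pos)
      moreover have "\<bar>h\<bar> * norm e \<le> \<bar>h\<bar> * (norm e + 1)" by (simp add: mult_left_mono)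
      ultimately have "norm (h *\<^sub>R e) < r" by simp
      then have "y + h *\<^sub>R e \<in> Q" using r by (auto simp: dist_norm)
      then show "Gt (y + h *\<^sub>R e) = G (y + h *\<^sub>R e)" by (simp add: Gt_def)
    qed
    show ?thesis
      using DERIV_cong_ev[OF refl ev, of "gt y" "g y"] dG[OF True] True by (simp add: gt_def)
  next
    case False
    obtain d where d: "d > 0" "\<forall>h. \<bar>h\<bar> < d \<longrightarrow> y + h *\<^sub>R e \<in> Q \<longrightarrow> G (y + h *\<^sub>R e) = 0"
      using out[OF False] by blast
    have ev: "eventually (\<lambda>h. Gt (y + h *\<^sub>R e) = 0) (nhds (0::real))"
      unfolding eventually_nhds_metric using d by (auto simp: Gt_def dist_real_def)
    show ?thesis
      using DERIV_cong_ev[OF refl ev, of "gt y" 0] False by (simp add: gt_def)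
  qed
  have D: "((\<lambda>h. Gt (y + h *\<^sub>R e)) has_real_derivative gt (y + s *\<^sub>R e)) (at s)" for y s
  proof -
    have "((\<lambda>h. Gt ((y + s *\<^sub>R e) + h *\<^sub>R e)) has_real_derivative gt (y + s *\<^sub>R e)) (at 0)"
      by (rule D0)
    moreover have "(\<lambda>h. Gt ((y + s *\<^sub>R e) + h *\<^sub>R e)) = (\<lambda>h. (\<lambda>s'. Gt (y + s' *\<^sub>R e)) (h + s))"
      by (auto simp: algebra_simps)
    ultimately show ?thesis using DERIV_shift[of "\<lambda>s'. Gt (y + s' *\<^sub>R e)" _ 0 s] by simp
  qed
  have cc: "compact (closure Q)" using Q by (simp add: compact_closure)
  then have "compact (g ` closure Q)" using cg by (simp add: compact_continuous_image)
  then obtain M0 where M0: "\<forall>x\<in>closure Q. norm (g x) \<le> M0"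
    using compact_imp_bounded[of "g ` closure Q"] unfolding bounded_iff by auto
  define M where "M = max M0 0"
  have M: "\<forall>x\<in>closure Q. norm (g x) \<le> M" and M00: "0 \<le> M"
    using M0 unfolding M_def by force+
  have Mt: "\<bar>gt y\<bar> \<le> M" for y
  proof (cases "y \<in> Q")
    case True then show ?thesis using M closure_subset by (auto simp: gt_def)
  next
    case False
    then show ?thesis using M00 by (auto simp: gt_def)
  qed
  obtain B where B: "\<forall>x\<in>Q. norm x \<le> B" using Q(2) unfolding bounded_iff by auto
  obtain A :: 'a where A: "cball 0 (B + norm e) \<subseteq> cbox (-A) A"
    using bounded_subset_cbox_symmetric[of "cball 0 (B + norm e)"] by auto
  define Box where "Box = cbox (-A) A"
  have QB: "Q \<subseteq> Box"
  proof
    fix y assume "y \<in> Q"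
    then have "norm y \<le> B + norm e" using B by (smt (verit) norm_ge_zero)
    then show "y \<in> Box" using A unfolding Box_def by auto
  qed
  have QBs: "Q \<subseteq> cbox (-A + c) (A + c)" if "norm c \<le> norm e" for c
  proof
    fix y assume y: "y \<in> Q"
    have "norm (y - c) \<le> B + norm e" using B y that norm_triangle_ineq4[of y c] by force
    then have "y - c \<in> cbox (-A) A" using A by auto
    then have "c + (y - c) \<in> (\<lambda>x. c + x) ` cbox (-A) A" by blast
    then show "y \<in> cbox (-A + c) (A + c)"
      using cbox_translation[of c "-A" A] by (simp add: add.commute)
  qed
  have GI: "G integrable_on Q" using cont_int[OF Q cG] .
  have GtI: "Gt integrable_on X" if "Q \<subseteq> X" for X
    unfolding Gt_def integrable_restrict_Int using GI that by (simp add: Int_absorb2)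
  have GtInt: "integral X Gt = integral Q G" if "Q \<subseteq> X" for X
    unfolding Gt_def integral_restrict_Int using that by (simp add: Int_absorb2)
  define hn where "hn n = 1 / real (Suc n)" for n
  have hn: "0 < hn n" "hn n \<le> 1" for n by (auto simp: hn_def)
  define Dn where "Dn n y = (Gt (y + hn n *\<^sub>R e) - Gt y) / hn n" for n y
  have shiftI: "(\<lambda>y. Gt (y + hn n *\<^sub>R e)) integrable_on Box \<and>
      integral Box (\<lambda>y. Gt (y + hn n *\<^sub>R e)) = integral Q G" for n
  proof -
    let ?c = "hn n *\<^sub>R e"
    have nc: "norm ?c \<le> norm e" using hn[of n] by (simp add: mult_left_le_one_le)
    have eqf: "(\<lambda>y. Gt (y + ?c)) = Gt \<circ> (+) ?c" by (auto simp: add.commute)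
    have "Gt integrable_on cbox (-A + ?c) (A + ?c)" using GtI QBs[OF nc] by blast
    then have I: "(Gt \<circ> (+) ?c) integrable_on Box"
      unfolding Box_def using integrable_on_shift_cbox[of Gt ?c "-A" A] by simp
    have "integral Box (Gt \<circ> (+) ?c) = integral (cbox (-A + ?c) (A + ?c)) Gt"
      unfolding Box_def by (rule integral_shift_cbox_plus)
    also have "\<dots> = integral Q G" using GtInt QBs[OF nc] by blast
    finally show ?thesis using I eqf by simp
  qed
  have DnI: "Dn n integrable_on Box" for n
    unfolding Dn_def using shiftI[of n] GtI[OF QB]
    by (intro integrable_on_divide integrable_diff) auto
  have DnInt: "integral Box (Dn n) = 0" for n
  proof -
    have "integral Box (Dn n) = (integral Box (\<lambda>y. Gt (y + hn n *\<^sub>R e)) - integral Box Gt) / hn n"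
      unfolding Dn_def using shiftI[of n] GtI[OF QB]
      by (simp add: integral_diff integral_divide)
    then show ?thesis using shiftI[of n] GtInt[OF QB] by simp
  qed
  have Dnb: "norm (Dn n y) \<le> M" for n y
  proof -
    obtain z where z: "0 < z" "z < hn n"
      "Gt (y + hn n *\<^sub>R e) - Gt (y + 0 *\<^sub>R e) = (hn n - 0) * gt (y + z *\<^sub>R e)"
      using MVT2[OF hn(1)[of n], of "\<lambda>s. Gt (y + s *\<^sub>R e)" "\<lambda>s. gt (y + s *\<^sub>R e)"] D by blast
    then have "Dn n y = gt (y + z *\<^sub>R e)" using hn[of n] unfolding Dn_def by simp
    then show ?thesis using Mt by simp
  qed
  have hn0: "filterlim hn (at 0) sequentially"
  proof -
    have "hn \<longlonglongrightarrow> 0"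
      unfolding hn_def using LIMSEQ_Suc[OF lim_1_over_n] by simp
    moreover have "\<forall>n. hn n \<noteq> 0" using hn(1) by (metis less_irrefl)
    ultimately show ?thesis by (auto simp: filterlim_at intro!: always_eventually)
  qed
  have conv: "(\<lambda>n. Dn n y) \<longlonglongrightarrow> gt y" for y
  proof -
    have "((\<lambda>h. (Gt (y + (0 + h) *\<^sub>R e) - Gt (y + 0 *\<^sub>R e)) / h) \<longlongrightarrow> gt y) (at 0)"
      using D0[of y] unfolding DERIV_def by simp
    then have "((\<lambda>h. (Gt (y + h *\<^sub>R e) - Gt y) / h) \<longlongrightarrow> gt y) (at 0)" by simp
    from filterlim_compose[OF this hn0] show ?thesis unfolding Dn_def o_def by simp
  qed
  have dc: "gt integrable_on Box" "(\<lambda>n. integral Box (Dn n)) \<longlonglongrightarrow> integral Box gt"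
  proof -
    have i: "(\<lambda>_. M) integrable_on Box" unfolding Box_def by (rule integrable_const)
    show "gt integrable_on Box" "(\<lambda>n. integral Box (Dn n)) \<longlonglongrightarrow> integral Box gt"
      using dominated_convergence[of Dn Box "\<lambda>_. M" gt, OF DnI i] Dnb conv by blast+
  qed
  have "(\<lambda>n. integral Box (Dn n)) \<longlonglongrightarrow> 0" using DnInt by simp
  then have "integral Box gt = 0" by (rule LIMSEQ_unique[OF dc(2)])
  moreover have "integral Box gt = integral Q g"
    unfolding gt_def integral_restrict_Int using QB by (simp add: Int_absorb2)
  moreover have "g integrable_on Q"
    using dc(1) unfolding gt_def integrable_restrict_Int using QB by (simp add: Int_absorb2)
  ultimately show ?thesis by simp
qed



lemma young: fixes x y k :: real assumes "k > 0" shows "x * y \<le> k / 2 * x^2 + y^2 / (2 * k)"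
proof -
  have "0 \<le> (k * x - y)^2 / (2 * k)" using assms by simp
  also have "(k * x - y)^2 / (2 * k) = k / 2 * x^2 + y^2 / (2 * k) - x * y"
    using assms by (simp add: power2_eq_square field_simps)
  finally show ?thesis by simp
qed

lemma alg1:
  fixes \<epsilon> w p a b ut HH N P :: real
  assumes "\<epsilon> > 0" "N \<ge> 0" "w = 1 / (N + \<epsilon>)" "p > 1" "ut = a + (p - 2) * (w * b)"
    "b^2 \<le> HH * N" "HH \<ge> 0"
  shows "\<epsilon> * P^2 * w^2 * (a * b - HH) \<le> ut^2 * P^2 / (4 * (p - 1))"
proof -
  have Ne: "N + \<epsilon> > 0" using assms by simp
  have w0: "w > 0" using assms Ne by simp
  have ew: "\<epsilon> * w \<le> 1"
  proof -
    have "\<epsilon> \<le> N + \<epsilon>" using assms by simp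
    then show ?thesis using Ne unfolding assms(3) by (simp add: divide_le_eq_1)
  qed
  define c where "c = w * b"
  have "w * b^2 \<le> HH"
  proof -
    have "b^2 \<le> HH * (N + \<epsilon>)" using assms by (smt (verit) mult_left_mono)
    then show ?thesis using Ne unfolding assms(3) by (simp add: pos_divide_le_eq)
  qed
  then have "w^2 * HH \<ge> w * c^2" using w0 unfolding c_def
    by (smt (verit, ccfv_SIG) mult_left_mono power2_eq_square power_mult_distrib zero_le_power2 mult.assoc)
  then have 1: "w^2 * (a * b - HH) \<le> w * (c * (a - c))"
    unfolding c_def by (simp add: power2_eq_square algebra_simps)
  have "ut - (p - 1) * c = a - c" using assms(5) unfolding c_def by (simp add: algebra_simps)
  then have "c * (a - c) = c * (ut - (p - 1) * c)" by simp
  also have "\<dots> \<le> ut^2 / (4 * (p - 1))"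
  proof -
    have "0 \<le> (ut - 2 * (p - 1) * c)^2" by simp
    then have "4 * (p - 1) * (c * (ut - (p - 1) * c)) \<le> ut^2"
      by (simp add: power2_eq_square algebra_simps)
    then show ?thesis using assms(4) by (simp add: field_simps)
  qed
  finally have 2: "w^2 * (a * b - HH) \<le> w * (ut^2 / (4 * (p - 1)))"
    using 1 w0 by (smt (verit) mult_left_mono)
  have "\<epsilon> * P^2 * w^2 * (a * b - HH) = \<epsilon> * P^2 * (w^2 * (a * b - HH))" by simp
  also have "\<dots> \<le> \<epsilon> * P^2 * (w * (ut^2 / (4 * (p - 1))))"
    using 2 assms(1) by (intro mult_left_mono) auto
  also have "\<dots> = (\<epsilon> * w) * (P^2 * (ut^2 / (4 * (p - 1))))" by simp
  also have "\<dots> \<le> 1 * (P^2 * (ut^2 / (4 * (p - 1))))"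
    using ew assms(4) by (intro mult_right_mono) auto
  finally show ?thesis by (simp add: mult.commute)
qed

lemma alg_main:
  fixes q Pd :: "'n::finite \<Rightarrow> real" and H :: "'n \<Rightarrow> 'n \<Rightarrow> real"
    and \<epsilon> p \<eta> P ut :: real
  assumes sym: "\<And>i j. H j i = H i j" and e: "\<epsilon> > 0" and p: "p > 1" and eta: "\<eta> > 0"
    and eq: "ut = (\<Sum>i\<in>UNIV. H i i) + (p - 2) * ((\<Sum>i\<in>UNIV. (\<Sum>j\<in>UNIV. H i j * q j) * q i) / ((\<Sum>i\<in>UNIV. (q i)^2) + \<epsilon>))"
  shows "- \<epsilon> / ((\<Sum>i\<in>UNIV. (q i)^2) + \<epsilon>) * P * (\<Sum>i\<in>UNIV. Pd i * (q i * (\<Sum>i\<in>UNIV. H i i) - (\<Sum>j\<in>UNIV. H i j * q j)))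
     + \<epsilon> * P^2 / ((\<Sum>i\<in>UNIV. (q i)^2) + \<epsilon>)^2 * ((\<Sum>i\<in>UNIV. H i i) * (\<Sum>i\<in>UNIV. (\<Sum>j\<in>UNIV. H i j * q j) * q i)
         - (\<Sum>i\<in>UNIV. (\<Sum>j\<in>UNIV. H i j * q j)^2))
    \<le> ut^2 * P^2 / (4 * (p - 1)) + \<eta> * ((\<Sum>i\<in>UNIV. \<Sum>j\<in>UNIV. (H i j)^2) * P^2)
      + (real CARD('n) + 1) / (2 * \<eta>) * \<epsilon> * (\<Sum>i\<in>UNIV. (Pd i)^2)"
proof -
  define N where "N = (\<Sum>i\<in>UNIV. (q i)^2)"
  define a where "a = (\<Sum>i\<in>UNIV. H i i)"
  define Hq where "Hq i = (\<Sum>j\<in>UNIV. H i j * q j)" for i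
  define b where "b = (\<Sum>i\<in>UNIV. Hq i * q i)"
  define HS where "HS = (\<Sum>i\<in>UNIV. \<Sum>j\<in>UNIV. (H i j)^2)"
  define HH where "HH = (\<Sum>i\<in>UNIV. (Hq i)^2)"
  define w where "w = 1 / (N + \<epsilon>)"
  define n where "n = real CARD('n)"
  have N0: "N \<ge> 0" unfolding N_def by (simp add: sum_nonneg)
  have Ne: "N + \<epsilon> > 0" using N0 e by simp
  have w0: "w > 0" unfolding w_def using Ne by simp
  have ew: "\<epsilon> * w \<le> 1" unfolding w_def using Ne e N0 by (simp add: field_simps)
  have wN: "w * N \<le> 1" unfolding w_def using Ne e N0 by (simp add: field_simps)
  have HS0: "HS \<ge> 0" unfolding HS_def by (simp add: sum_nonneg)
  have HH0: "HH \<ge> 0" unfolding HH_def by (simp add: sum_nonneg)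
  have S1: "HH \<le> N * HS"
  proof -
    have "(Hq i)^2 \<le> (\<Sum>j\<in>UNIV. (H i j)^2) * N" for i
      unfolding Hq_def N_def by (rule Cauchy_Schwarz_ineq_sum)
    then have "HH \<le> (\<Sum>i\<in>UNIV. (\<Sum>j\<in>UNIV. (H i j)^2) * N)"
      unfolding HH_def by (rule sum_mono)
    also have "\<dots> = N * HS" unfolding HS_def by (subst sum_distrib_left) (simp add: mult.commute)
    finally show ?thesis .
  qed
  have S2: "a^2 \<le> n * HS"
  proof -
    have "a^2 \<le> (\<Sum>i\<in>UNIV. (H i i)^2) * n"
      unfolding a_def n_def by (rule sum_squared_le_sum_of_squares)
    moreover have "(\<Sum>i\<in>UNIV. (H i i)^2) \<le> HS"
      unfolding HS_def by (intro sum_mono member_le_sum) auto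
    moreover have "n \<ge> 0" unfolding n_def by simp
    ultimately show ?thesis by (smt (verit) mult.commute mult_left_mono)
  qed
  have S3: "b^2 \<le> HH * N"
    unfolding b_def HH_def N_def by (rule Cauchy_Schwarz_ineq_sum)
  define F where "F i = q i * a - Hq i" for i
  have S4: "(\<Sum>i\<in>UNIV. (F i)^2) \<le> 2 * N * (n + 1) * HS"
  proof -
    have "(F i)^2 \<le> 2 * ((q i)^2 * a^2) + 2 * (Hq i)^2" for i
    proof -
      have "0 \<le> (q i * a + Hq i)^2" by simp
      then show ?thesis unfolding F_def by (simp add: power2_eq_square algebra_simps)
    qed
    then have "(\<Sum>i\<in>UNIV. (F i)^2) \<le> (\<Sum>i\<in>UNIV. 2 * ((q i)^2 * a^2) + 2 * (Hq i)^2)"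
      by (rule sum_mono)
    also have "\<dots> = 2 * N * a^2 + 2 * HH"
      unfolding N_def HH_def by (simp add: sum.distrib sum_distrib_left sum_distrib_right mult.assoc)
    also have "\<dots> \<le> 2 * N * (n * HS) + 2 * (N * HS)"
      using S1 S2 N0 by (smt (verit) mult_left_mono)
    also have "\<dots> = 2 * N * (n + 1) * HS" by (simp add: algebra_simps)
    finally show ?thesis .
  qed
  define k where "k = \<eta> / (n + 1)"
  have n0: "n \<ge> 0" unfolding n_def by simp
  have k0: "k > 0" unfolding k_def using eta n0 by simp
  have T2: "- \<epsilon> * w * P * (\<Sum>i\<in>UNIV. Pd i * F i) \<le> \<eta> * (HS * P^2) + (n + 1) / (2 * \<eta>) * \<epsilon> * (\<Sum>i\<in>UNIV. (Pd i)^2)"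
  proof -
    have "- \<epsilon> * w * P * (\<Sum>i\<in>UNIV. Pd i * F i) = \<epsilon> * (\<Sum>i\<in>UNIV. (- (w * P * F i)) * Pd i)"
      by (simp add: sum_distrib_left sum_negf algebra_simps)
    also have "\<dots> \<le> \<epsilon> * (\<Sum>i\<in>UNIV. k / 2 * (- (w * P * F i))^2 + (Pd i)^2 / (2 * k))"
      using e by (intro mult_left_mono sum_mono young[OF k0]) auto
    also have "\<dots> = \<epsilon> * (k / 2 * w^2 * P^2 * (\<Sum>i\<in>UNIV. (F i)^2)) + \<epsilon> / (2 * k) * (\<Sum>i\<in>UNIV. (Pd i)^2)"
      by (simp add: sum.distrib sum_distrib_left sum_divide_distrib power_mult_distrib algebra_simps)
    also have "\<epsilon> * (k / 2 * w^2 * P^2 * (\<Sum>i\<in>UNIV. (F i)^2)) \<le> \<epsilon> * (k / 2 * w^2 * P^2 * (2 * N * (n + 1) * HS))"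
      using S4 e k0 by (intro mult_left_mono) auto
    also have "\<epsilon> * (k / 2 * w^2 * P^2 * (2 * N * (n + 1) * HS)) = (k * (n + 1)) * ((\<epsilon> * w) * (w * N)) * (P^2 * HS)"
      by (simp add: power2_eq_square algebra_simps)
    also have "\<dots> \<le> (k * (n + 1)) * 1 * (P^2 * HS)"
    proof -
      have "(\<epsilon> * w) * (w * N) \<le> 1 * 1" using ew wN e w0 N0 by (intro mult_mono) auto
      then show ?thesis using k0 n0 HS0 by (intro mult_right_mono mult_left_mono) auto
    qed
    also have "k * (n + 1) = \<eta>" unfolding k_def using n0 by simp
    also have "\<epsilon> / (2 * k) = (n + 1) / (2 * \<eta>) * \<epsilon>" unfolding k_def using n0 eta by (simp add: field_simps)
    finally show ?thesis by (simp add: mult.commute)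
  qed
  have T1: "\<epsilon> * P^2 * w^2 * (a * b - HH) \<le> ut^2 * P^2 / (4 * (p - 1))"
    by (rule alg1[OF e N0 w_def p _ S3 HH0]) (simp add: eq a_def b_def Hq_def N_def w_def)
  have "- \<epsilon> / (N + \<epsilon>) * P * (\<Sum>i\<in>UNIV. Pd i * F i) + \<epsilon> * P^2 / (N + \<epsilon>)^2 * (a * b - HH)
     = - \<epsilon> * w * P * (\<Sum>i\<in>UNIV. Pd i * F i) + \<epsilon> * P^2 * w^2 * (a * b - HH)"
    unfolding w_def by (simp add: power2_eq_square)
  also have "\<dots> \<le> ut^2 * P^2 / (4 * (p - 1)) + \<eta> * (HS * P^2) + (n + 1) / (2 * \<eta>) * \<epsilon> * (\<Sum>i\<in>UNIV. (Pd i)^2)"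
    using T1 T2 by simp
  finally show ?thesis unfolding N_def a_def b_def HH_def HS_def F_def Hq_def n_def .
qed

lemma ident:
  fixes q Pd :: "'n::finite \<Rightarrow> real" and H :: "'n \<Rightarrow> 'n \<Rightarrow> real" and T :: "'n \<Rightarrow> 'n \<Rightarrow> 'n \<Rightarrow> real"
    and \<epsilon> P :: real
  assumes sym: "\<And>i j. H j i = H i j" and Tsym: "\<And>i j. T j i j = T i j j"
    and Ne: "(\<Sum>i\<in>UNIV. (q i)^2) + \<epsilon> > 0"
    and that: "N' = (\<Sum>i\<in>UNIV. (q i)^2) + \<epsilon>" "a' = (\<Sum>i\<in>UNIV. H i i)"
    and N_def: "N = (\<Sum>i\<in>UNIV. (q i)^2)" and a_def: "a = (\<Sum>i\<in>UNIV. H i i)"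
    and F_def: "F = (\<lambda>i. q i * a - (\<Sum>j\<in>UNIV. q j * H j i))"
    and dN_def: "dN = (\<lambda>i. (\<Sum>k\<in>UNIV. 2 * q k * H i k))"
    and dF_def: "dF = (\<lambda>i. H i i * a + q i * (\<Sum>j\<in>UNIV. T i j j) - (\<Sum>j\<in>UNIV. H i j * H j i + q j * T i j i))"
  shows "\<epsilon> / 2 * ((a^2 - (\<Sum>i\<in>UNIV. \<Sum>j\<in>UNIV. (H i j)^2)) / (N + \<epsilon>) * P^2)
     - \<epsilon> / 2 * (\<Sum>i\<in>UNIV. 2 * P * Pd i * F i / (N + \<epsilon>) + P^2 * dF i / (N + \<epsilon>) - P^2 * F i * dN i / (N + \<epsilon>)^2)
   = - \<epsilon> / N' * P * (\<Sum>i\<in>UNIV. Pd i * (q i * a' - (\<Sum>j\<in>UNIV. H i j * q j)))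
     + \<epsilon> * P^2 / N'^2 * (a' * (\<Sum>i\<in>UNIV. (\<Sum>j\<in>UNIV. H i j * q j) * q i)
         - (\<Sum>i\<in>UNIV. (\<Sum>j\<in>UNIV. H i j * q j)^2))"
proof -
  define Hq where "Hq i = (\<Sum>j\<in>UNIV. H i j * q j)" for i
  define HS where "HS = (\<Sum>i\<in>UNIV. \<Sum>j\<in>UNIV. (H i j)^2)"
  define b where "b = (\<Sum>i\<in>UNIV. Hq i * q i)"
  define HH where "HH = (\<Sum>i\<in>UNIV. (Hq i)^2)"
  have NN: "N' = N + \<epsilon>" "a' = a" using that unfolding N_def a_def by auto
  have FF: "F i = q i * a - Hq i" for i
    unfolding F_def Hq_def using sym by (simp add: mult.commute)
  have dNN: "dN i = 2 * Hq i" for i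
    unfolding dN_def Hq_def by (simp add: sum_distrib_left mult.commute mult.left_commute)
  have sT: "(\<Sum>i\<in>UNIV. \<Sum>j\<in>UNIV. q j * T i j i) = (\<Sum>i\<in>UNIV. \<Sum>j\<in>UNIV. q i * T i j j)"
  proof -
    have "(\<Sum>i\<in>UNIV. \<Sum>j\<in>UNIV. q j * T i j i) = (\<Sum>j\<in>UNIV. \<Sum>i\<in>UNIV. q j * T i j i)"
      by (rule sum.swap)
    also have "\<dots> = (\<Sum>j\<in>UNIV. \<Sum>i\<in>UNIV. q j * T j i i)" using Tsym by simp
    finally show ?thesis .
  qed
  have sdF: "(\<Sum>i\<in>UNIV. dF i) = a^2 - HS"
  proof -
    have "(\<Sum>i\<in>UNIV. dF i) = (\<Sum>i\<in>UNIV. H i i) * a + (\<Sum>i\<in>UNIV. \<Sum>j\<in>UNIV. q i * T i j j)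
       - (\<Sum>i\<in>UNIV. \<Sum>j\<in>UNIV. H i j * H j i) - (\<Sum>i\<in>UNIV. \<Sum>j\<in>UNIV. q j * T i j i)"
      unfolding dF_def by (simp add: sum.distrib sum_subtractf sum_distrib_left sum_distrib_right)
    also have "(\<Sum>i\<in>UNIV. \<Sum>j\<in>UNIV. H i j * H j i) = HS"
      unfolding HS_def using sym by (simp add: power2_eq_square)
    finally show ?thesis using sT unfolding a_def by (simp add: power2_eq_square)
  qed
  have sFdN: "(\<Sum>i\<in>UNIV. F i * dN i) = 2 * (a * b - HH)"
    unfolding FF dNN b_def HH_def
    by (simp add: sum_subtractf sum_distrib_left power2_eq_square algebra_simps)
  have "(\<Sum>i\<in>UNIV. 2 * P * Pd i * F i / (N + \<epsilon>) + P^2 * dF i / (N + \<epsilon>) - P^2 * F i * dN i / (N + \<epsilon>)^2)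
     = 2 * P / (N + \<epsilon>) * (\<Sum>i\<in>UNIV. Pd i * F i) + P^2 / (N + \<epsilon>) * (\<Sum>i\<in>UNIV. dF i)
       - P^2 / (N + \<epsilon>)^2 * (\<Sum>i\<in>UNIV. F i * dN i)"
    by (simp add: sum.distrib sum_subtractf sum_distrib_left sum_distrib_right sum_divide_distrib algebra_simps)
  also have "\<dots> = 2 * P / (N + \<epsilon>) * (\<Sum>i\<in>UNIV. Pd i * F i) + P^2 / (N + \<epsilon>) * (a^2 - HS)
       - P^2 / (N + \<epsilon>)^2 * (2 * (a * b - HH))" using sdF sFdN by simp
  finally have E: "(\<Sum>i\<in>UNIV. 2 * P * Pd i * F i / (N + \<epsilon>) + P^2 * dF i / (N + \<epsilon>) - P^2 * F i * dN i / (N + \<epsilon>)^2)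
     = 2 * P / (N + \<epsilon>) * (\<Sum>i\<in>UNIV. Pd i * F i) + P^2 / (N + \<epsilon>) * (a^2 - HS)
       - P^2 / (N + \<epsilon>)^2 * (2 * (a * b - HH))" .
  have "(\<Sum>i\<in>UNIV. Pd i * (q i * a' - (\<Sum>j\<in>UNIV. H i j * q j))) = (\<Sum>i\<in>UNIV. Pd i * F i)"
    using NN FF Hq_def by simp
  moreover have "(\<Sum>i\<in>UNIV. (\<Sum>j\<in>UNIV. H i j * q j) * q i) = b" unfolding b_def Hq_def ..
  moreover have "(\<Sum>i\<in>UNIV. (\<Sum>j\<in>UNIV. H i j * q j)^2) = HH" unfolding HH_def Hq_def ..
  moreover have "N + \<epsilon> > 0" using Ne N_def by simp
  moreover have fid: "\<epsilon> / 2 * (X / D * P^2) - \<epsilon> / 2 * (2 * P / D * SS + P^2 / D * X - P^2 / D^2 * (2 * Y))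
      = - \<epsilon> / D * P * SS + \<epsilon> * P^2 / D^2 * Y" if "D > 0" for D X Y SS :: real
    using that by (simp add: field_simps power2_eq_square)
  ultimately show ?thesis
    unfolding E HS_def[symmetric] NN
    by (metis (no_types, lifting))
qed



lemma DERIV_eqI: "(f has_real_derivative D) (at x) \<Longrightarrow> D = D' \<Longrightarrow> (f has_real_derivative D') (at x)"
  by simp

lemma quot_id: "(D::real) \<noteq> 0 \<Longrightarrow> ((A + B * P2) * D - P2 * F * (N' + 0)) / (D * D) = A / D + P2 * B / D - P2 * F * N' / D^2"
  by (simp add: field_simps power2_eq_square)

lemma main_ineq:
  fixes ue \<phi> :: "(real^'n::finite) \<times> real \<Rightarrow> real" and z :: "real^'n"
  assumes p: "p > 1" and e: "\<epsilon> > 0" and eta: "\<eta> > 0"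
    and S: "open S" and sm: "smooth_on S ue"
    and eqn: "\<And>y. y \<in> S \<Longrightarrow> Dt ue y + pF_eps p \<epsilon> (grad_x ue y) (hess_x ue y) = 0"
    and Q_def: "Q = ball z R \<times> {a<..<b}"
    and QS: "closure Q \<subseteq> S"
    and phi: "smooth_on UNIV \<phi>" "compact (closure {y. \<phi> y \<noteq> 0})"
      "closure {y. \<phi> y \<noteq> 0} \<subseteq> ball z R \<times> UNIV"
  shows "\<epsilon> / 2 * integral Q (\<lambda>y. ((lap_x ue y)^2 - mat_norm_sq (hess_x ue y)) / ((norm (grad_x ue y))^2 + \<epsilon>) * (\<phi> y)^2)
     \<le> 1 / (4 * (p - 1)) * integral Q (\<lambda>y. (Dt ue y)^2 * (\<phi> y)^2)
       + \<eta> * integral Q (\<lambda>y. mat_norm_sq (hess_x ue y) * (\<phi> y)^2)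
       + (real CARD('n) + 1) / (2 * \<eta>) * \<epsilon> * integral Q (\<lambda>y. (norm (grad_x \<phi> y))^2)"
proof -
  define E :: "'n \<Rightarrow> (real^'n) \<times> real" where "E i = (axis i 1, 0)" for i
  have ck3: "Ck_on 3 S ue" using sm unfolding smooth_on_def by blast
  have ck2: "Ck_on 2 S ue" using sm unfolding smooth_on_def by blast
  have ckp: "Ck_on 1 UNIV \<phi>" using phi(1) unfolding smooth_on_def by blast
  have ck2d: "Ck_on 2 S (Dx j ue)" for j
  proof -
    have "Ck_on (2 + length [E j]) S ue" using ck3 by simp
    from Ck_shift[OF this] show ?thesis by (simp add: Dx_def E_def)
  qed
  have Dx_it: "Dx k ue = iter_ddir [E k] ue" "Dx i (Dx k ue) = iter_ddir [E i, E k] ue"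
    "Dx i (Dx j (Dx k ue)) = iter_ddir [E i, E j, E k] ue" "Dx i \<phi> = iter_ddir [E i] \<phi>" for i j k
    by (simp_all add: Dx_def E_def)
  have cq: "continuous_on S (Dx k ue)" for k
    using Ck_cont[OF ck3, of "[E k]"] by (simp add: Dx_def E_def)
  have cH: "continuous_on S (Dx i (Dx k ue))" for i k
    using Ck_cont[OF ck3, of "[E i, E k]"] by (simp add: Dx_def E_def)
  have cT: "continuous_on S (Dx i (Dx j (Dx k ue)))" for i j k
    using Ck_cont[OF ck3, of "[E i, E j, E k]"] by (simp add: Dx_def E_def)
  have cP: "continuous_on UNIV \<phi>" using Ck_cont[OF ckp, of "[]"] by simp
  have cPd: "continuous_on UNIV (Dx i \<phi>)" for i
    using Ck_cont[OF ckp, of "[E i]"] by (simp add: Dx_def E_def)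
  have cDt: "continuous_on S (Dt ue)"
    using Ck_cont[OF ck3, of "[(0,1)]"] by (simp add: Dt_def)
  have dq: "((\<lambda>h. Dx k ue (y + h *\<^sub>R E i)) has_real_derivative Dx i (Dx k ue) y) (at 0)"
    if "y \<in> S" for y i k
    using line_deriv_Ck[OF ck3, of "[E k]" y 0 "E i"] that by (simp add: Dx_def E_def zero_prod_def[symmetric])
  have dH: "((\<lambda>h. Dx j (Dx k ue) (y + h *\<^sub>R E i)) has_real_derivative Dx i (Dx j (Dx k ue)) y) (at 0)"
    if "y \<in> S" for y i j k
    using line_deriv_Ck[OF ck3, of "[E j, E k]" y 0 "E i"] that by (simp add: Dx_def E_def zero_prod_def[symmetric])
  have dP: "((\<lambda>h. \<phi> (y + h *\<^sub>R E i)) has_real_derivative Dx i \<phi> y) (at 0)" for y i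
    using line_deriv_Ck[OF ckp, of "[]" y 0 "E i"] by (simp add: Dx_def E_def zero_prod_def[symmetric])
  have sym: "Dx j (Dx i ue) y = Dx i (Dx j ue) y" if "y \<in> S" for y i j
    using schwarz[OF ck2 S that, of "E j" "E i"] by (simp add: Dx_def E_def)
  have Tsym: "Dx j (Dx i (Dx j ue)) y = Dx i (Dx j (Dx j ue)) y" if "y \<in> S" for y i j
    using schwarz[OF ck2d S that, of "E j" "E i"] by (simp add: Dx_def E_def)
  define Nf where "Nf y = (\<Sum>k\<in>UNIV. (Dx k ue y)^2)" for y
  define af where "af y = (\<Sum>j\<in>UNIV. Dx j (Dx j ue) y)" for y
  define Ff where "Ff i y = Dx i ue y * af y - (\<Sum>j\<in>UNIV. Dx j ue y * Dx j (Dx i ue) y)" for i y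
  define dNf where "dNf i y = (\<Sum>k\<in>UNIV. 2 * Dx k ue y * Dx i (Dx k ue) y)" for i y
  define dFf where "dFf i y = Dx i (Dx i ue) y * af y + Dx i ue y * (\<Sum>j\<in>UNIV. Dx i (Dx j (Dx j ue)) y)
     - (\<Sum>j\<in>UNIV. Dx i (Dx j ue) y * Dx j (Dx i ue) y + Dx j ue y * Dx i (Dx j (Dx i ue)) y)" for i y
  define Gf where "Gf i y = (\<phi> y)^2 * Ff i y / (Nf y + \<epsilon>)" for i y
  define gf where "gf i y = 2 * \<phi> y * Dx i \<phi> y * Ff i y / (Nf y + \<epsilon>) + (\<phi> y)^2 * dFf i y / (Nf y + \<epsilon>)
     - (\<phi> y)^2 * Ff i y * dNf i y / (Nf y + \<epsilon>)^2" for i y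
  have Npos: "Nf y + \<epsilon> > 0" for y
    using e unfolding Nf_def by (smt (verit) sum_nonneg zero_le_power2)
  have dN: "((\<lambda>h. Nf (y + h *\<^sub>R E i)) has_real_derivative dNf i y) (at 0)" if "y \<in> S" for y i
    unfolding Nf_def dNf_def
  proof (rule DERIV_sum)
    fix k :: 'n
    show "((\<lambda>h. (Dx k ue (y + h *\<^sub>R E i))^2) has_real_derivative 2 * Dx k ue y * Dx i (Dx k ue) y) (at 0)"
      by (rule DERIV_eqI[OF DERIV_power[OF dq[OF that], where n=2]]) simp
  qed
  have da: "((\<lambda>h. af (y + h *\<^sub>R E i)) has_real_derivative (\<Sum>j\<in>UNIV. Dx i (Dx j (Dx j ue)) y)) (at 0)"
    if "y \<in> S" for y i
    unfolding af_def by (rule DERIV_sum) (rule dH[OF that])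
  have dF: "((\<lambda>h. Ff i (y + h *\<^sub>R E i)) has_real_derivative dFf i y) (at 0)" if "y \<in> S" for y i
  proof -
    have A: "((\<lambda>h. Dx i ue (y + h *\<^sub>R E i) * af (y + h *\<^sub>R E i)) has_real_derivative
        Dx i (Dx i ue) y * af y + (\<Sum>j\<in>UNIV. Dx i (Dx j (Dx j ue)) y) * Dx i ue y) (at 0)"
      using DERIV_mult[OF dq[OF that] da[OF that]] by simp
    have B: "((\<lambda>h. \<Sum>j\<in>UNIV. Dx j ue (y + h *\<^sub>R E i) * Dx j (Dx i ue) (y + h *\<^sub>R E i)) has_real_derivative
        (\<Sum>j\<in>UNIV. Dx i (Dx j ue) y * Dx j (Dx i ue) y + Dx j ue y * Dx i (Dx j (Dx i ue)) y)) (at 0)"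
    proof (rule DERIV_sum)
      fix j :: 'n
      show "((\<lambda>h. Dx j ue (y + h *\<^sub>R E i) * Dx j (Dx i ue) (y + h *\<^sub>R E i)) has_real_derivative
        Dx i (Dx j ue) y * Dx j (Dx i ue) y + Dx j ue y * Dx i (Dx j (Dx i ue)) y) (at 0)"
        using DERIV_mult[OF dq[OF that] dH[OF that]] by (simp add: mult.commute)
    qed
    show ?thesis unfolding Ff_def
      by (rule DERIV_eqI[OF DERIV_diff[OF A B]]) (simp add: dFf_def mult.commute)
  qed
  have dG: "((\<lambda>h. Gf i (y + h *\<^sub>R E i)) has_real_derivative gf i y) (at 0)" if "y \<in> S" for y i
  proof -
    have P2: "((\<lambda>h. (\<phi> (y + h *\<^sub>R E i))^2) has_real_derivative 2 * \<phi> y * Dx i \<phi> y) (at 0)"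
      by (rule DERIV_eqI[OF DERIV_power[OF dP, where n=2]]) simp
    have num: "((\<lambda>h. (\<phi> (y + h *\<^sub>R E i))^2 * Ff i (y + h *\<^sub>R E i)) has_real_derivative
        2 * \<phi> y * Dx i \<phi> y * Ff i y + dFf i y * (\<phi> y)^2) (at 0)"
      using DERIV_mult[OF P2 dF[OF that]] by simp
    have den: "((\<lambda>h. Nf (y + h *\<^sub>R E i) + \<epsilon>) has_real_derivative dNf i y + 0) (at 0)"
      by (rule DERIV_add[OF dN[OF that] DERIV_const])
    have yy: "y + 0 *\<^sub>R E i = y" by simp
    have nz: "Nf (y + 0 *\<^sub>R E i) + \<epsilon> \<noteq> 0" using Npos[of y] by simp
    from DERIV_divide[OF num den nz] show ?thesis
      unfolding Gf_def yy
      by (rule DERIV_eqI) (use Npos[of y] in \<open>simp only: gf_def quot_id[of "Nf y + \<epsilon>"]\<close>)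
  qed
  have QsubS: "Q \<subseteq> S" using QS closure_subset by blast
  have oQ: "open Q" unfolding Q_def by (intro open_Times) auto
  have bQ: "bounded Q" unfolding Q_def by (intro bounded_Times) auto
  have cPS: "continuous_on S \<phi>" using continuous_on_subset[OF cP subset_UNIV] .
  have cPdS: "continuous_on S (Dx i \<phi>)" for i using continuous_on_subset[OF cPd subset_UNIV] .
  have cNf: "continuous_on S (\<lambda>y. Nf y)" unfolding Nf_def by (intro continuous_intros cq)
  have caf: "continuous_on S (\<lambda>y. af y)" unfolding af_def by (intro continuous_intros cH)
  have cFf: "continuous_on S (\<lambda>y. Ff i y)" for i unfolding Ff_def by (intro continuous_intros cq cH caf)
  have cdNf: "continuous_on S (\<lambda>y. dNf i y)" for i unfolding dNf_def by (intro continuous_intros cq cH)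
  have cdFf: "continuous_on S (\<lambda>y. dFf i y)" for i unfolding dFf_def by (intro continuous_intros cq cH cT caf)
  have Nne: "Nf y + \<epsilon> \<noteq> 0" for y using Npos[of y] by linarith
  have cGf: "continuous_on S (\<lambda>y. Gf i y)" for i
    unfolding Gf_def by (intro continuous_intros cPS cFf cNf) (simp add: Nne)
  have cgf: "continuous_on S (\<lambda>y. gf i y)" for i
    unfolding gf_def by (intro continuous_intros cPS cPdS cFf cNf cdNf cdFf) (simp_all add: Nne)
  define K where "K = fst ` closure {y. \<phi> y \<noteq> 0}"
  have cK: "compact K" unfolding K_def
    using compact_continuous_image[OF continuous_on_fst[OF continuous_on_id] phi(2)] by simp
  have KB: "K \<subseteq> ball z R" unfolding K_def using phi(3) by auto
  have ibp_i: "gf i integrable_on Q \<and> integral Q (gf i) = 0" for i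
  proof -
    have r: "gf i integrable_on Q \<and> integral Q (gf i) = 0"
    proof (rule ibp[OF oQ bQ, where e="E i" and G="Gf i"])
      show "continuous_on (closure Q) (Gf i)" using continuous_on_subset[OF cGf QS] by simp
      show "continuous_on (closure Q) (gf i)" using continuous_on_subset[OF cgf QS] by simp
      show "((\<lambda>h. Gf i (y + h *\<^sub>R E i)) has_real_derivative gf i y) (at 0)" if "y \<in> Q" for y
        by (rule dG) (use QsubS that in blast)
      show "\<exists>d>0. \<forall>h. \<bar>h\<bar> < d \<longrightarrow> y + h *\<^sub>R E i \<in> Q \<longrightarrow> Gf i (y + h *\<^sub>R E i) = 0"
        if "y \<notin> Q" for y
      proof (cases "snd y \<in> {a<..<b}")
        case False
        have "y + h *\<^sub>R E i \<notin> Q" for h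
        proof -
          have "snd (y + h *\<^sub>R E i) = snd y" by (simp add: E_def)
          then show ?thesis using False unfolding Q_def by (auto simp: mem_Times_iff)
        qed
        then show ?thesis by (intro exI[of _ 1]) auto
      next
        case True
        then have "fst y \<notin> ball z R" using that unfolding Q_def by (auto simp: mem_Times_iff)
        then have "fst y \<notin> K" using KB by blast
        then obtain d where d: "d > 0" "\<forall>x\<in>K. d \<le> dist (fst y) x"
          using separate_point_closed[OF compact_imp_closed[OF cK]] by blast
        show ?thesis
        proof (intro exI[of _ d] conjI allI impI)
          fix h :: real assume h: "\<bar>h\<bar> < d"
          have f: "fst (y + h *\<^sub>R E i) = fst y + h *\<^sub>R axis i 1" by (simp add: E_def)
          have "dist (fst y) (fst y + h *\<^sub>R axis i 1) = \<bar>h\<bar>" by (simp add: dist_norm)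
          then have dd: "dist (fst y) (fst (y + h *\<^sub>R E i)) = \<bar>h\<bar>" unfolding f .
          have "fst (y + h *\<^sub>R E i) \<notin> K"
          proof
            assume "fst (y + h *\<^sub>R E i) \<in> K"
            then have "d \<le> dist (fst y) (fst (y + h *\<^sub>R E i))" using d(2) by blast
            then show False using h dd by simp
          qed
          then have "y + h *\<^sub>R E i \<notin> closure {y. \<phi> y \<noteq> 0}" unfolding K_def by blast
          then have "\<phi> (y + h *\<^sub>R E i) = 0" using closure_subset[of "{y. \<phi> y \<noteq> 0}"] by auto
          then show "Gf i (y + h *\<^sub>R E i) = 0" unfolding Gf_def by simp
        qed (use d in auto)
      qed
    qed
    then show ?thesis .
  qed
  define HSf where "HSf y = (\<Sum>i\<in>UNIV. \<Sum>j\<in>UNIV. (Dx i (Dx j ue) y)^2)" for y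
  define PS where "PS y = (\<Sum>i\<in>UNIV. (Dx i \<phi> y)^2)" for y
  have lapE: "lap_x ue y = af y" for y
    unfolding lap_x_def trace_def hess_x_def af_def by simp
  have mnE: "mat_norm_sq (hess_x ue y) = HSf y" for y
    unfolding mat_norm_sq_def hess_x_def HSf_def by simp
  have ngE: "(norm (grad_x ue y))^2 = Nf y" for y
    unfolding power2_norm_eq_inner inner_vec_def grad_x_def Nf_def by (simp add: power2_eq_square)
  have npE: "(norm (grad_x \<phi> y))^2 = PS y" for y
    unfolding power2_norm_eq_inner inner_vec_def grad_x_def PS_def by (simp add: power2_eq_square)
  have eqE: "Dt ue y = af y + (p - 2) * ((\<Sum>i\<in>UNIV. (\<Sum>j\<in>UNIV. Dx i (Dx j ue) y * Dx j ue y) * Dx i ue y) / (Nf y + \<epsilon>))"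
    if "y \<in> S" for y
  proof -
    have "Dt ue y + pF_eps p \<epsilon> (grad_x ue y) (hess_x ue y) = 0" using eqn[OF that] .
    moreover have "pF_eps p \<epsilon> (grad_x ue y) (hess_x ue y) = - af y - (p - 2) * (\<Sum>i\<in>UNIV. (\<Sum>j\<in>UNIV. Dx i (Dx j ue) y * Dx j ue y) * Dx i ue y) / (Nf y + \<epsilon>)"
      unfolding pF_eps_def ngE
      by (simp add: trace_def hess_x_def af_def matrix_vector_mult_def inner_vec_def grad_x_def)
    ultimately show ?thesis by simp
  qed
  have pw: "\<epsilon> / 2 * (((lap_x ue y)^2 - mat_norm_sq (hess_x ue y)) / ((norm (grad_x ue y))^2 + \<epsilon>) * (\<phi> y)^2)
      - \<epsilon> / 2 * (\<Sum>i\<in>UNIV. gf i y)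
    \<le> 1 / (4 * (p - 1)) * ((Dt ue y)^2 * (\<phi> y)^2) + \<eta> * (mat_norm_sq (hess_x ue y) * (\<phi> y)^2)
      + (real CARD('n) + 1) / (2 * \<eta>) * \<epsilon> * (norm (grad_x \<phi> y))^2" if yQ: "y \<in> Q" for y
  proof -
    have yS: "y \<in> S" using yQ QsubS by blast
    have I: "\<epsilon> / 2 * (((af y)^2 - (\<Sum>i\<in>UNIV. \<Sum>j\<in>UNIV. (Dx i (Dx j ue) y)^2)) / (Nf y + \<epsilon>) * (\<phi> y)^2)
      - \<epsilon> / 2 * (\<Sum>i\<in>UNIV. 2 * \<phi> y * Dx i \<phi> y * Ff i y / (Nf y + \<epsilon>) + (\<phi> y)^2 * dFf i y / (Nf y + \<epsilon>)
          - (\<phi> y)^2 * Ff i y * dNf i y / (Nf y + \<epsilon>)^2)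
      = - \<epsilon> / (Nf y + \<epsilon>) * \<phi> y * (\<Sum>i\<in>UNIV. Dx i \<phi> y * (Dx i ue y * af y - (\<Sum>j\<in>UNIV. Dx i (Dx j ue) y * Dx j ue y)))
     + \<epsilon> * (\<phi> y)^2 / (Nf y + \<epsilon>)^2 * (af y * (\<Sum>i\<in>UNIV. (\<Sum>j\<in>UNIV. Dx i (Dx j ue) y * Dx j ue y) * Dx i ue y)
         - (\<Sum>i\<in>UNIV. (\<Sum>j\<in>UNIV. Dx i (Dx j ue) y * Dx j ue y)^2))"
    proof (rule ident[where q="\<lambda>k. Dx k ue y" and H="\<lambda>i j. Dx i (Dx j ue) y"
          and T="\<lambda>i j k. Dx i (Dx j (Dx k ue)) y" and Pd="\<lambda>i. Dx i \<phi> y"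
          and F="\<lambda>i. Ff i y" and dN="\<lambda>i. dNf i y" and dF="\<lambda>i. dFf i y"])
      show "Dx j (Dx i ue) y = Dx i (Dx j ue) y" for i j using sym[OF yS] .
      show "Dx j (Dx i (Dx j ue)) y = Dx i (Dx j (Dx j ue)) y" for i j using Tsym[OF yS] .
      show "(\<Sum>i\<in>UNIV. (Dx i ue y)^2) + \<epsilon> > 0" using Npos[of y] unfolding Nf_def .
    qed (simp_all add: Nf_def af_def Ff_def dNf_def dFf_def)
    have A: "- \<epsilon> / (Nf y + \<epsilon>) * \<phi> y * (\<Sum>i\<in>UNIV. Dx i \<phi> y * (Dx i ue y * af y - (\<Sum>j\<in>UNIV. Dx i (Dx j ue) y * Dx j ue y)))
     + \<epsilon> * (\<phi> y)^2 / (Nf y + \<epsilon>)^2 * (af y * (\<Sum>i\<in>UNIV. (\<Sum>j\<in>UNIV. Dx i (Dx j ue) y * Dx j ue y) * Dx i ue y)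
         - (\<Sum>i\<in>UNIV. (\<Sum>j\<in>UNIV. Dx i (Dx j ue) y * Dx j ue y)^2))
      \<le> (Dt ue y)^2 * (\<phi> y)^2 / (4 * (p - 1)) + \<eta> * (HSf y * (\<phi> y)^2)
      + (real CARD('n) + 1) / (2 * \<eta>) * \<epsilon> * PS y"
      using alg_main[where q="\<lambda>k. Dx k ue y" and H="\<lambda>i j. Dx i (Dx j ue) y"
          and Pd="\<lambda>i. Dx i \<phi> y" and \<epsilon>=\<epsilon> and p=p and \<eta>=\<eta> and P="\<phi> y" and ut="Dt ue y",
          OF sym[OF yS] e p eta] eqE[OF yS]
      unfolding Nf_def af_def HSf_def PS_def by simp
    have gsum: "(\<Sum>i\<in>UNIV. gf i y) = (\<Sum>i\<in>UNIV. 2 * \<phi> y * Dx i \<phi> y * Ff i y / (Nf y + \<epsilon>) + (\<phi> y)^2 * dFf i y / (Nf y + \<epsilon>)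
          - (\<phi> y)^2 * Ff i y * dNf i y / (Nf y + \<epsilon>)^2)" unfolding gf_def ..
    show ?thesis
      unfolding lapE mnE ngE npE gsum I[unfolded HSf_def[symmetric]]
      using A by (simp add: HSf_def)
  qed
  define f1 where "f1 y = ((lap_x ue y)^2 - mat_norm_sq (hess_x ue y)) / ((norm (grad_x ue y))^2 + \<epsilon>) * (\<phi> y)^2" for y
  define r1 where "r1 y = (Dt ue y)^2 * (\<phi> y)^2" for y
  define r2 where "r2 y = mat_norm_sq (hess_x ue y) * (\<phi> y)^2" for y
  define r3 where "r3 y = (norm (grad_x \<phi> y))^2" for y
  define C where "C = (real CARD('n) + 1) / (2 * \<eta>)"
  have cHSf: "continuous_on S (\<lambda>y. HSf y)" unfolding HSf_def by (intro continuous_intros cH)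
  have cPSf: "continuous_on S (\<lambda>y. PS y)" unfolding PS_def by (intro continuous_intros cPdS)
  have intQ: "f integrable_on Q" if "continuous_on S f" for f :: "_ \<Rightarrow> real"
    using cont_int[OF oQ bQ continuous_on_subset[OF that QS]] .
  have f1I: "f1 integrable_on Q"
  proof (rule intQ)
    have "f1 = (\<lambda>y. ((af y)^2 - HSf y) / (Nf y + \<epsilon>) * (\<phi> y)^2)"
      unfolding f1_def lapE mnE ngE by simp
    moreover have "continuous_on S (\<lambda>y. ((af y)^2 - HSf y) / (Nf y + \<epsilon>) * (\<phi> y)^2)"
      by (intro continuous_intros caf cHSf cNf cPS) (simp add: Nne)
    ultimately show "continuous_on S f1" by simp
  qed
  have r1I: "r1 integrable_on Q"
    by (rule intQ) (unfold r1_def, intro continuous_intros cDt cPS)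
  have r2I: "r2 integrable_on Q"
  proof (rule intQ)
    have "r2 = (\<lambda>y. HSf y * (\<phi> y)^2)" unfolding r2_def mnE by simp
    moreover have "continuous_on S (\<lambda>y. HSf y * (\<phi> y)^2)" by (intro continuous_intros cHSf cPS)
    ultimately show "continuous_on S r2" by simp
  qed
  have r3I: "r3 integrable_on Q"
  proof (rule intQ)
    have "r3 = (\<lambda>y. PS y)" unfolding r3_def npE by simp
    then show "continuous_on S r3" using cPSf by simp
  qed
  have gI: "gf i integrable_on Q" for i using ibp_i by blast
  have g0: "integral Q (gf i) = 0" for i using ibp_i by blast
  have sumI: "(\<lambda>y. \<Sum>i\<in>UNIV. gf i y) integrable_on Q" by (rule integrable_sum) (auto intro: gI)
  have LI: "(\<lambda>y. \<epsilon> / 2 * f1 y - \<epsilon> / 2 * (\<Sum>i\<in>UNIV. gf i y)) integrable_on Q"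
    by (intro integrable_diff integrable_on_mult_right f1I sumI)
  have RI1: "(\<lambda>y. 1 / (4 * (p - 1)) * r1 y + \<eta> * r2 y) integrable_on Q"
    by (intro integrable_add integrable_on_mult_right r1I r2I)
  have RI: "(\<lambda>y. 1 / (4 * (p - 1)) * r1 y + \<eta> * r2 y + C * \<epsilon> * r3 y) integrable_on Q"
    by (intro integrable_add RI1 integrable_on_mult_right r3I)
  have le: "integral Q (\<lambda>y. \<epsilon> / 2 * f1 y - \<epsilon> / 2 * (\<Sum>i\<in>UNIV. gf i y))
      \<le> integral Q (\<lambda>y. 1 / (4 * (p - 1)) * r1 y + \<eta> * r2 y + C * \<epsilon> * r3 y)"
    by (rule integral_le[OF LI RI]) (use pw in \<open>simp add: f1_def r1_def r2_def r3_def C_def\<close>)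
  have L: "integral Q (\<lambda>y. \<epsilon> / 2 * f1 y - \<epsilon> / 2 * (\<Sum>i\<in>UNIV. gf i y)) = \<epsilon> / 2 * integral Q f1"
  proof -
    have "integral Q (\<lambda>y. \<epsilon> / 2 * f1 y - \<epsilon> / 2 * (\<Sum>i\<in>UNIV. gf i y))
        = integral Q (\<lambda>y. \<epsilon> / 2 * f1 y) - integral Q (\<lambda>y. \<epsilon> / 2 * (\<Sum>i\<in>UNIV. gf i y))"
      by (rule integral_diff) (intro integrable_on_mult_right f1I sumI)+
    also have "integral Q (\<lambda>y. \<Sum>i\<in>UNIV. gf i y) = (\<Sum>i\<in>UNIV. integral Q (gf i))"
      by (rule integral_sum) (auto intro: gI)
    then have "integral Q (\<lambda>y. \<epsilon> / 2 * (\<Sum>i\<in>UNIV. gf i y)) = 0" using g0 by simp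
    finally show ?thesis by simp
  qed
  have R: "integral Q (\<lambda>y. 1 / (4 * (p - 1)) * r1 y + \<eta> * r2 y + C * \<epsilon> * r3 y)
      = 1 / (4 * (p - 1)) * integral Q r1 + \<eta> * integral Q r2 + C * \<epsilon> * integral Q r3"
  proof -
    have "integral Q (\<lambda>y. 1 / (4 * (p - 1)) * r1 y + \<eta> * r2 y + C * \<epsilon> * r3 y)
        = integral Q (\<lambda>y. 1 / (4 * (p - 1)) * r1 y + \<eta> * r2 y) + integral Q (\<lambda>y. C * \<epsilon> * r3 y)"
      by (rule integral_add[OF RI1]) (intro integrable_on_mult_right r3I)
    also have "integral Q (\<lambda>y. 1 / (4 * (p - 1)) * r1 y + \<eta> * r2 y)
        = integral Q (\<lambda>y. 1 / (4 * (p - 1)) * r1 y) + integral Q (\<lambda>y. \<eta> * r2 y)"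
      by (rule integral_add) (intro integrable_on_mult_right r1I r2I)+
    finally show ?thesis by simp
  qed
  have "\<epsilon> / 2 * integral Q f1 \<le> 1 / (4 * (p - 1)) * integral Q r1 + \<eta> * integral Q r2 + C * \<epsilon> * integral Q r3"
    using le[unfolded L R] .
  then show ?thesis unfolding f1_def r1_def r2_def r3_def C_def .
qed


theorem lemma4p4:
  fixes \<eta> :: real
  assumes "CARD('n::finite) \<ge> 2"
    and "0 < \<eta>" and "\<eta> < 1"
  shows "\<exists>C::real. \<forall>(p::real) (\<Omega>::(real^'n) set) (T::real) (u::(real^'n) \<times> real \<Rightarrow> real)
            (U::(real^'n) set) (\<epsilon>::real) (ue::(real^'n) \<times> real \<Rightarrow> real)
            (z::real^'n) (s::real) (r::real) (\<phi>::(real^'n) \<times> real \<Rightarrow> real).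
     ((1 < p \<and> p < 2) \<or> 2 < p) \<and>
     open \<Omega> \<and> connected \<Omega> \<and> 0 < T \<and>
     visc_sol (pF_lo p) (pF_hi p) (\<Omega> \<times> {0<..<T}) u \<and>
     smooth_domain U \<and> closure U \<subseteq> \<Omega> \<and>
     0 < \<epsilon> \<and> \<epsilon> \<le> 1 \<and>
     continuous_on (closure (U \<times> {0<..<T})) ue \<and> smooth_on (U \<times> {0<..<T}) ue \<and>
     visc_sol (pF_eps p \<epsilon>) (pF_eps p \<epsilon>) (U \<times> {0<..<T}) ue \<and>
     (\<forall>y\<in>parabolic_boundary U T. ue y = u y) \<and>
     0 < r \<and>
     compact (closure (ball z (2*r) \<times> {s - 4*r^2<..<s})) \<and>
     closure (ball z (2*r) \<times> {s - 4*r^2<..<s}) \<subseteq> U \<times> {0<..<T} \<and>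
     smooth_on UNIV \<phi> \<and>
     compact (closure {y. \<phi> y \<noteq> 0}) \<and>
     closure {y. \<phi> y \<noteq> 0} \<subseteq> ball z (2*r) \<times> {s - 4*r^2<..<s + 4*r^2}
     \<longrightarrow>
     \<epsilon> / 2 * integral (ball z (2*r) \<times> {s - 4*r^2<..<s})
        (\<lambda>y. ((lap_x ue y)^2 - mat_norm_sq (hess_x ue y)) / ((norm (grad_x ue y))^2 + \<epsilon>) * (\<phi> y)^2)
     \<le> 1 / (4 * (p - 1)) * integral (ball z (2*r) \<times> {s - 4*r^2<..<s}) (\<lambda>y. (Dt ue y)^2 * (\<phi> y)^2)
       + \<eta> * integral (ball z (2*r) \<times> {s - 4*r^2<..<s}) (\<lambda>y. mat_norm_sq (hess_x ue y) * (\<phi> y)^2)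
       + C * \<epsilon> * integral (ball z (2*r) \<times> {s - 4*r^2<..<s}) (\<lambda>y. (norm (grad_x \<phi> y))^2)"
  proof -
  show ?thesis
  proof (intro exI[of _ "(real CARD('n) + 1) / (2 * \<eta>)"] allI impI)
    fix p :: real and \<Omega> :: "(real^'n) set" and T :: real and u :: "(real^'n) \<times> real \<Rightarrow> real"
      and U :: "(real^'n) set" and \<epsilon> :: real and ue :: "(real^'n) \<times> real \<Rightarrow> real"
      and z :: "real^'n" and s :: real and r :: real and \<phi> :: "(real^'n) \<times> real \<Rightarrow> real"
    assume H: "((1 < p \<and> p < 2) \<or> 2 < p) \<and>
     open \<Omega> \<and> connected \<Omega> \<and> 0 < T \<and>
     visc_sol (pF_lo p) (pF_hi p) (\<Omega> \<times> {0<..<T}) u \<and>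
     smooth_domain U \<and> closure U \<subseteq> \<Omega> \<and>
     0 < \<epsilon> \<and> \<epsilon> \<le> 1 \<and>
     continuous_on (closure (U \<times> {0<..<T})) ue \<and> smooth_on (U \<times> {0<..<T}) ue \<and>
     visc_sol (pF_eps p \<epsilon>) (pF_eps p \<epsilon>) (U \<times> {0<..<T}) ue \<and>
     (\<forall>y\<in>parabolic_boundary U T. ue y = u y) \<and>
     0 < r \<and>
     compact (closure (ball z (2*r) \<times> {s - 4*r^2<..<s})) \<and>
     closure (ball z (2*r) \<times> {s - 4*r^2<..<s}) \<subseteq> U \<times> {0<..<T} \<and>
     smooth_on UNIV \<phi> \<and>
     compact (closure {y. \<phi> y \<noteq> 0}) \<and>
     closure {y. \<phi> y \<noteq> 0} \<subseteq> ball z (2*r) \<times> {s - 4*r^2<..<s + 4*r^2}"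
    have p: "p > 1" using H by auto
    have e: "\<epsilon> > 0" using H by blast
    have oU: "open U" using H unfolding smooth_domain_def by blast
    have S: "open (U \<times> {0<..<T})" using oU by (intro open_Times) auto
    have sm: "smooth_on (U \<times> {0<..<T}) ue" using H by blast
    have vs: "visc_sol (pF_eps p \<epsilon>) (pF_eps p \<epsilon>) (U \<times> {0<..<T}) ue" using H by blast
    have ck2: "Ck_on 2 (U \<times> {0<..<T}) ue" using sm unfolding smooth_on_def by blast
    have eqn: "Dt ue y + pF_eps p \<epsilon> (grad_x ue y) (hess_x ue y) = 0" if y: "y \<in> U \<times> {0<..<T}" for y
    proof -
      have loc: "\<exists>\<delta>>0. \<forall>y'\<in>(U \<times> {0<..<T}) \<inter> ball y \<delta>. ue y' - ue y' \<le> ue y - ue y"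
        by (intro exI[of _ 1]) auto
      have loc2: "\<exists>\<delta>>0. \<forall>y'\<in>(U \<times> {0<..<T}) \<inter> ball y \<delta>. ue y' - ue y' \<ge> ue y - ue y"
        by (intro exI[of _ 1]) auto
      have "Dt ue y + pF_eps p \<epsilon> (grad_x ue y) (hess_x ue y) \<le> 0"
        using vs ck2 y loc unfolding visc_sol_def visc_subsol_def by blast
      moreover have "Dt ue y + pF_eps p \<epsilon> (grad_x ue y) (hess_x ue y) \<ge> 0"
        using vs ck2 y loc2 unfolding visc_sol_def visc_supersol_def by blast
      ultimately show ?thesis by simp
    qed
    have QS: "closure (ball z (2*r) \<times> {s - 4*r^2<..<s}) \<subseteq> U \<times> {0<..<T}" using H by blast
    have ph1: "smooth_on UNIV \<phi>" using H by blast
    have ph2: "compact (closure {y. \<phi> y \<noteq> 0})" using H by blast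
    have ph3: "closure {y. \<phi> y \<noteq> 0} \<subseteq> ball z (2*r) \<times> UNIV" using H by blast
    show "\<epsilon> / 2 * integral (ball z (2*r) \<times> {s - 4*r^2<..<s})
        (\<lambda>y. ((lap_x ue y)^2 - mat_norm_sq (hess_x ue y)) / ((norm (grad_x ue y))^2 + \<epsilon>) * (\<phi> y)^2)
     \<le> 1 / (4 * (p - 1)) * integral (ball z (2*r) \<times> {s - 4*r^2<..<s}) (\<lambda>y. (Dt ue y)^2 * (\<phi> y)^2)
       + \<eta> * integral (ball z (2*r) \<times> {s - 4*r^2<..<s}) (\<lambda>y. mat_norm_sq (hess_x ue y) * (\<phi> y)^2)
       + (real CARD('n) + 1) / (2 * \<eta>) * \<epsilon> * integral (ball z (2*r) \<times> {s - 4*r^2<..<s}) (\<lambda>y. (norm (grad_x \<phi> y))^2)"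
      by (rule main_ineq[OF p e assms(2) S sm eqn refl QS ph1 ph2 ph3])
  qed
qed

end
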